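(* Let $\lambda$ be a nonzero real number and $n$ a positive integer. Then, as polynomials in $x$, $$\phi_{n+1,\lambda}(x)=x\phi_{n,\lambda}(x)+\Big(x\frac{d}{dx}-n\lambda\Big)\phi_{n,\lambda}(x)=x\sum_{k=0}^{n}\binom{n}{k}(1-\lambda)_{n-k,\lambda}\,\phi_{k,\lambda}(x).$$
   Context: For real $y$ and integer $k\ge0$: $(y)_{0,\lambda}=1$, $(y)_{k,\lambda}=y(y-\lambda)\cdots(y-(k-1)\lambda)$. The degenerate exponential is $e_\lambda(t)=\sum_{k\ge0}(1)_{k,\lambda}t^k/k!=(1+\lambda t)^{1/\lambda}$. The degenerate Bell polynomials $\phi_{n,\lambda}(x)$ are defined by $e^{x(e_\lambda(t)-1)}=\sum_{n\ge0}\phi_{n,\lambda}(x)\frac{t^n}{n!}$. *)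

theory Defs
  imports "HOL-Analysis.Analysis" "HOL-Computational_Algebra.Formal_Power_Series"
begin

definition deg_fall :: "real \<Rightarrow> nat \<Rightarrow> real \<Rightarrow> real" where
  "deg_fall y k l = (\<Prod>i<k. y - of_nat i * l)"

definition deg_exp_fps :: "real \<Rightarrow> real fps" where
  "deg_exp_fps l = Abs_fps (\<lambda>k. deg_fall 1 k l / fact k)"

definition deg_bell :: "nat \<Rightarrow> real \<Rightarrow> real \<Rightarrow> real" where
  "deg_bell n l x = fact n * fps_nth (fps_exp 1 oo (fps_const x * (deg_exp_fps l - 1))) n"

end

theory Submission imports Defs begin

definition DD :: "real \<Rightarrow> real fps" where "DD l = deg_exp_fps l - 1"

lemma E_nth: "fps_nth (deg_exp_fps l) k = deg_fall 1 k l / fact k"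
  by (simp add: deg_exp_fps_def)

lemma DD0: "fps_nth (DD l) 0 = 0"
  by (simp add: DD_def E_nth deg_fall_def)

lemma DD_pow_zero: "n < i \<Longrightarrow> fps_nth (DD l ^ i) n = 0"
proof (induction i arbitrary: n)
  case 0 then show ?case by simp
next
  case (Suc i)
  have "fps_nth (DD l ^ Suc i) n = (\<Sum>j=0..n. fps_nth (DD l) j * fps_nth (DD l ^ i) (n - j))"
    by (simp add: fps_mult_nth)
  also have "\<dots> = 0"
  proof (rule sum.neutral, clarify)
    fix j assume "j \<in> {0..n}"
    show "fps_nth (DD l) j * fps_nth (DD l ^ i) (n - j) = 0"
    proof (cases "j = 0")
      case True then show ?thesis by (simp add: DD0)
    next
      case False then have "n - j < i" using Suc.prems \<open>j \<in> {0..n}\<close> by auto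
      then show ?thesis using Suc.IH by simp
    qed
  qed
  finally show ?case .
qed

lemma deg_fall_Suc: "deg_fall y (Suc k) l = deg_fall y k l * (y - of_nat k * l)"
  by (simp add: deg_fall_def)

lemma deg_fall_shift: "deg_fall 1 (Suc m) l = deg_fall (1 - l) m l"
  unfolding deg_fall_def
  by (subst prod.lessThan_Suc_shift) (simp add: algebra_simps)

lemma Ederiv: "fps_nth (fps_deriv (deg_exp_fps l)) m = deg_fall (1 - l) m l / fact m"
  by (simp add: E_nth deg_fall_shift[symmetric] del: of_nat_Suc)

lemma Eode: "fps_deriv (deg_exp_fps l) * (1 + fps_const l * fps_X) = deg_exp_fps l"
proof (rule fps_ext)
  fix n
  have "fps_nth (fps_deriv (deg_exp_fps l) * (1 + fps_const l * fps_X)) n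
      = fps_nth (fps_deriv (deg_exp_fps l)) n + l * (if n = 0 then 0 else fps_nth (fps_deriv (deg_exp_fps l)) (n - 1))"
  proof -
    have "fps_deriv (deg_exp_fps l) * (1 + fps_const l * fps_X) = fps_deriv (deg_exp_fps l) + fps_const l * (fps_X * fps_deriv (deg_exp_fps l))"
      by (simp add: algebra_simps)
    then show ?thesis by (simp only: fps_add_nth fps_mult_left_const_nth fps_X_mult_nth)
  qed
  also have "\<dots> = fps_nth (deg_exp_fps l) n"
  proof (cases n)
    case 0 then show ?thesis by (simp add: E_nth deg_fall_def)
  next
    case (Suc m)
    have "fps_nth (fps_deriv (deg_exp_fps l)) n = deg_fall 1 n l * (1 - of_nat n * l) / fact n"
      by (simp add: E_nth deg_fall_Suc del: of_nat_Suc)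
    moreover have "fps_nth (fps_deriv (deg_exp_fps l)) (n - 1) = deg_fall 1 n l * of_nat n / fact n"
      using Suc by (simp add: E_nth field_simps del: of_nat_Suc)
    moreover have "deg_fall 1 n l * (1 - of_nat n * l) / fact n + l * (deg_fall 1 n l * of_nat n / fact n) = deg_fall 1 n l / fact n"
      by (simp add: field_simps)
    ultimately show ?thesis using Suc by (simp add: E_nth)
  qed
  finally show "fps_nth (fps_deriv (deg_exp_fps l) * (1 + fps_const l * fps_X)) n = fps_nth (deg_exp_fps l) n" .
qed

lemma DD_ode: "fps_deriv (DD l ^ Suc i) * (1 + fps_const l * fps_X)
   = fps_const (of_nat (Suc i)) * DD l ^ Suc i + fps_const (of_nat (Suc i)) * DD l ^ i"
proof -
  have dD: "fps_deriv (DD l) = fps_deriv (deg_exp_fps l)" by (simp add: DD_def)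
  have E: "deg_exp_fps l = DD l + 1" by (simp add: DD_def)
  have "fps_deriv (DD l ^ Suc i) * (1 + fps_const l * fps_X)
      = fps_const (of_nat (Suc i)) * DD l ^ i * (fps_deriv (deg_exp_fps l) * (1 + fps_const l * fps_X))"
    by (simp only: fps_deriv_power dD diff_Suc_1 mult_ac)
  also have "\<dots> = fps_const (of_nat (Suc i)) * DD l ^ i * (DD l + 1)" by (subst Eode) (simp add: DD_def)
  also have "\<dots> = fps_const (of_nat (Suc i)) * DD l ^ Suc i + fps_const (of_nat (Suc i)) * DD l ^ i"
    by (simp add: algebra_simps)
  finally show ?thesis .
qed

lemma DD_rec: "real (n+1) * fps_nth (DD l ^ Suc i) (n+1) + l * real n * fps_nth (DD l ^ Suc i) n
   = real (Suc i) * fps_nth (DD l ^ Suc i) n + real (Suc i) * fps_nth (DD l ^ i) n"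
proof -
  let ?f = "fps_deriv (DD l ^ Suc i)"
  have "?f * (1 + fps_const l * fps_X) = ?f + fps_const l * (fps_X * ?f)"
    by (simp add: algebra_simps)
  then have "fps_nth (?f * (1 + fps_const l * fps_X)) n = fps_nth ?f n + l * (if n = 0 then 0 else fps_nth ?f (n - 1))"
    by (simp only: fps_add_nth fps_mult_left_const_nth fps_X_mult_nth)
  also have "\<dots> = real (n+1) * fps_nth (DD l ^ Suc i) (n+1) + l * real n * fps_nth (DD l ^ Suc i) n"
    by (cases n) (simp_all del: power_Suc)
  finally show ?thesis unfolding DD_ode by (simp del: power_Suc)
qed

definition cc :: "real \<Rightarrow> nat \<Rightarrow> nat \<Rightarrow> real" where
  "cc l n i = fact n / fact i * fps_nth (DD l ^ i) n"

lemma cc_rec: "cc l (Suc n) (Suc i) = cc l n i + (real (Suc i) - real n * l) * cc l n (Suc i)"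
proof -
  have r: "real (n+1) * fps_nth (DD l ^ Suc i) (n+1) = real (Suc i) * fps_nth (DD l ^ Suc i) n + real (Suc i) * fps_nth (DD l ^ i) n - l * real n * fps_nth (DD l ^ Suc i) n"
    using DD_rec[of n l i] by linarith
  have "cc l (Suc n) (Suc i) = fact n / fact (Suc i) * (real (n+1) * fps_nth (DD l ^ Suc i) (n+1))"
    unfolding cc_def by (simp del: power_Suc of_nat_Suc fact_Suc add: fact_Suc[of n])
  also have "\<dots> = fact n / fact (Suc i) * (real (Suc i) * fps_nth (DD l ^ Suc i) n + real (Suc i) * fps_nth (DD l ^ i) n - l * real n * fps_nth (DD l ^ Suc i) n)"
    by (simp only: r)
  also have "\<dots> = cc l n i + (real (Suc i) - real n * l) * cc l n (Suc i)"
    unfolding cc_def by (simp del: power_Suc of_nat_Suc add: fact_Suc[of i] field_simps)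
  finally show ?thesis .
qed

lemma cc0: "n \<ge> 1 \<Longrightarrow> cc l n 0 = 0"
  by (simp add: cc_def)

lemma cc_big: "n < i \<Longrightarrow> cc l n i = 0"
  by (simp add: cc_def DD_pow_zero)

lemma bell_poly: "deg_bell n l x = (\<Sum>i=0..n. cc l n i * x ^ i)"
proof -
  have "deg_bell n l x = fact n * (\<Sum>i=0..n. 1 / fact i * (x ^ i * fps_nth (DD l ^ i) n))"
    unfolding deg_bell_def DD_def[symmetric] fps_compose_nth
    by (simp add: power_mult_distrib fps_const_power)
  then show ?thesis unfolding cc_def by (simp add: sum_distrib_left mult_ac)
qed

lemma bell_deriv: "deriv (\<lambda>y. deg_bell n l y) x = (\<Sum>i=0..n. cc l n i * (real i * x ^ (i - 1)))"
proof -
  have "((\<lambda>y. \<Sum>i=0..n. cc l n i * y ^ i) has_field_derivative (\<Sum>i=0..n. cc l n i * (real i * x ^ (i - 1)))) (at x)"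
    by (auto intro!: derivative_eq_intros sum.cong simp: mult_ac)
  then show ?thesis unfolding bell_poly by (rule DERIV_imp_deriv)
qed

lemma eq1:
  assumes "n \<ge> 1"
  shows "deg_bell (n+1) l x = x * deg_bell n l x + (x * deriv (\<lambda>y. deg_bell n l y) x - real n * l * deg_bell n l x)"
proof -
  define g where "g i = (real i - real n * l) * cc l n i * x ^ i" for i
  have g0: "g 0 = 0" using cc0[OF assms] by (simp add: g_def)
  have gS: "g (Suc n) = 0" using cc_big[of n "Suc n" l] by (simp add: g_def)
  have "deg_bell (n+1) l x = (\<Sum>i=0..Suc n. cc l (Suc n) i * x ^ i)" by (simp add: bell_poly)
  also have "\<dots> = cc l (Suc n) 0 + (\<Sum>i=0..n. cc l (Suc n) (Suc i) * x ^ Suc i)"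
    by (subst sum.atLeast0_atMost_Suc_shift) simp
  also have "\<dots> = (\<Sum>i=0..n. x * (cc l n i * x ^ i) + g (Suc i))"
    using cc0[of "Suc n" l] by (simp add: cc_rec g_def algebra_simps)
  also have "\<dots> = x * deg_bell n l x + (\<Sum>i=0..n. g (Suc i))"
    by (simp add: sum.distrib sum_distrib_left bell_poly)
  also have "(\<Sum>i=0..n. g (Suc i)) = (\<Sum>i=0..n. g i)"
    using sum.atLeast0_atMost_Suc_shift[of g n] sum.atLeast0_atMost_Suc[of g n] g0 gS by simp
  also have "\<dots> = (\<Sum>i=0..n. x * (cc l n i * (real i * x ^ (i - 1)))) - real n * l * (\<Sum>i=0..n. cc l n i * x ^ i)"
    unfolding sum_distrib_left sum_subtractf[symmetric]
  proof (rule sum.cong[OF refl])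
    fix i show "g i = x * (cc l n i * (real i * x ^ (i - 1))) - real n * l * (cc l n i * x ^ i)"
      by (cases i) (simp_all add: g_def algebra_simps)
  qed
  finally show ?thesis unfolding bell_deriv by (simp add: bell_poly sum_distrib_left)
qed

lemma eq2:
  "deg_bell (n+1) l x = x * (\<Sum>k=0..n. real (n choose k) * deg_fall (1 - l) (n - k) l * deg_bell k l x)"
proof -
  define B where "B = fps_const x * DD l"
  define F where "F = fps_exp (1::real) oo B"
  have B0: "fps_nth B 0 = 0" by (simp add: B_def DD0)
  have bell: "deg_bell k l x = fact k * fps_nth F k" for k
    by (simp add: deg_bell_def F_def B_def DD_def)
  have "fps_deriv F = fps_const x * (F * fps_deriv (deg_exp_fps l))"
    unfolding F_def fps_compose_deriv[OF B0] by (simp add: B_def DD_def mult_ac)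
  then have "fps_nth (fps_deriv F) n = x * fps_nth (F * fps_deriv (deg_exp_fps l)) n"
    by (simp only: fps_mult_left_const_nth)
  also have "fps_nth (F * fps_deriv (deg_exp_fps l)) n = (\<Sum>k=0..n. fps_nth F k * (deg_fall (1 - l) (n - k) l / fact (n - k)))"
    by (simp only: fps_mult_nth Ederiv)
  finally have "fps_nth (fps_deriv F) n = x * (\<Sum>k=0..n. fps_nth F k * (deg_fall (1 - l) (n - k) l / fact (n - k)))" .
  then have "fps_nth (fps_deriv F) n = (\<Sum>k=0..n. fps_nth F k * (x * (deg_fall (1 - l) (n - k) l / fact (n - k))))"
    by (simp add: sum_distrib_left mult_ac)
  then have "real (n+1) * fps_nth F (n+1) = (\<Sum>k=0..n. fps_nth F k * (x * (deg_fall (1 - l) (n - k) l / fact (n - k))))"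
    by simp
  then have "deg_bell (n+1) l x = fact n * (\<Sum>k=0..n. fps_nth F k * (x * (deg_fall (1 - l) (n - k) l / fact (n - k))))"
    unfolding bell by (simp del: of_nat_Suc add: fact_Suc[of n] mult_ac)
  also have "\<dots> = x * (\<Sum>k=0..n. real (n choose k) * deg_fall (1 - l) (n - k) l * deg_bell k l x)"
    unfolding sum_distrib_left
  proof (rule sum.cong[OF refl])
    fix k assume "k \<in> {0..n}"
    then have "k \<le> n" by simp
    show "fact n * (fps_nth F k * (x * (deg_fall (1 - l) (n - k) l / fact (n - k)))) =
          x * (real (n choose k) * deg_fall (1 - l) (n - k) l * deg_bell k l x)"
      unfolding bell binomial_fact[OF \<open>k \<le> n\<close>] by (simp add: field_simps)
  qed
  finally show ?thesis .
qed

theorem theorem11: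
  fixes l :: real and n :: nat
  assumes "l \<noteq> 0" and "n \<ge> 1"
  shows "\<forall>x::real.
     deg_bell (n+1) l x = x * deg_bell n l x + (x * deriv (\<lambda>y. deg_bell n l y) x - real n * l * deg_bell n l x)
   \<and> x * deg_bell n l x + (x * deriv (\<lambda>y. deg_bell n l y) x - real n * l * deg_bell n l x)
       = x * (\<Sum>k=0..n. real (n choose k) * deg_fall (1 - l) (n - k) l * deg_bell k l x)"
  using eq1[OF assms(2)] eq2 by metis

end
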